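(* Let $q\ge 2$, $\mathcal{S}$ an SLP deriving $T$ with $|T|\ge q$, and $\phi$ a fingerprint function that is collision free on the substrings of length $q-1$ of $T$. Let $C$ be the CS-tree constructed by the algorithm (see context) and let $\mathcal{T}$ be the suffix tree of $C$. Then every node $v$ of $\mathcal{T}$ with string depth $sd(v)\ge q$ is a leaf.
   Context: Strings are 0-indexed; $s[i:j]$ is the substring from position $i$ to $j$ inclusive. An SLP is a set of rules $X_1,\dots,X_n$, each $X_i=a$ or $X_i=X_lX_r$ ($l,r<i$); $t_{X_i}$ is the derived string, $|X_i|=|t_{X_i}|$, $T=t_{X_n}$; $occ(X_i)$ is the number of occurrences of $X_i$ in the derivation tree. For $X_i=X_lX_r$ with $|X_i|\ge q$, $r_{X_i}=t_{X_i}[\max(0,|X_l|-q+1):\min(|X_l|+q-2,|X_i|-1)]$. Graph $G$: start empty, nodes keyed by fingerprints. For each rule $X_i=X_lX_r$ with $|X_i|\ge q$ (any order), with $r=r_{X_i}$: create node $\phi(r[0:q-2])$ if absent; for $j=1,\dots,|r|-q+1$, create node $\phi(r[j:j+q-2])$ if absent, create an edge labelled $r[j+q-2]$ with counter $0$ from node $\phi(r[j-1:j+q-3])$ to node $\phi(r[j:j+q-2])$ if none exists in that direction, and add $occ(X_i)$ to its counter. Start node: the node labelled $\phi(T[0:q-2])$. CS-tree $C$: create a path of $q-1$ edges from a root $u_0$ down to $u_{q-1}$, edge $u_{j-1}\to u_j$ labelled $T[j-1]$; $u_{q-1}$ corresponds to the start node. Depth-first traverse $G$ from the start node along directed edges;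 exploring an edge from $x$ (tree node $\tau(x)$) to $y$ with label $c$ and counter $m$: if $y$ is unvisited create $\tau(y)$ as child of $\tau(x)$ via an edge labelled $c$ with counter $m$ (node label copied from $y$) and continue from $y$; otherwise create a new leaf child of $\tau(x)$ via an edge labelled $c$ with counter $m$, labelled with $y$'s label. Suffix tree of $C$: for each node $v$ of $C$ let $w_v$ be the string of edge labels on the path from $v$ up to the root of $C$ (read upward, starting with the edge entering $v$); these are the suffixes represented by $C$. The suffix tree $\mathcal{T}$ is the compact trie (generalized suffix tree) of the strings $w_v\$$, $\$$ a fresh terminal symbol. The string depth $sd(v)$ of a node of $\mathcal{T}$ is the total length of edge labels from the root of $\mathcal{T}$ to $v$. *)

theory Defs
  imports Main "HOL-Library.Sublist"
begin

text \<open>s[i:j] (0-indexed, inclusive).\<close>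
definition substr :: "'a list \<Rightarrow> nat \<Rightarrow> nat \<Rightarrow> 'a list" where
  "substr s i j = take (Suc j - i) (drop i s)"

text \<open>Rule X_i is the (i)-th list entry (0-indexed): either a terminal or X_l X_r.\<close>
datatype 'a slp_rule = Term 'a | NT nat nat

definition wf_slp :: "'a slp_rule list \<Rightarrow> bool" where
  "wf_slp R \<longleftrightarrow> R \<noteq> [] \<and> (\<forall>i < length R. \<forall>l r. R ! i = NT l r \<longrightarrow> l < i \<and> r < i)"

definition derivs :: "'a slp_rule list \<Rightarrow> 'a list list" where
  "derivs R = foldl (\<lambda>acc rl. acc @ [case rl of Term a \<Rightarrow> [a] | NT l r \<Rightarrow> acc ! l @ acc ! r]) [] R"

definition deriv :: "'a slp_rule list \<Rightarrow> nat \<Rightarrow> 'a list" where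
  "deriv R i = derivs R ! i"

definition slp_text :: "'a slp_rule list \<Rightarrow> 'a list" where
  "slp_text R = deriv R (length R - 1)"

text \<open>Entry j of occ_counts is the function i \<mapsto> number of occurrences of X_i in the
  derivation tree of X_j.\<close>
definition occ_counts :: "'a slp_rule list \<Rightarrow> (nat \<Rightarrow> nat) list" where
  "occ_counts R = foldl (\<lambda>acc rl. acc @ [\<lambda>i. (if i = length acc then 1 else 0) +
       (case rl of Term _ \<Rightarrow> 0 | NT l r \<Rightarrow> (acc ! l) i + (acc ! r) i)]) [] R"

definition occ :: "'a slp_rule list \<Rightarrow> nat \<Rightarrow> nat" where
  "occ R i = (occ_counts R ! (length R - 1)) i"

definition rX :: "'a slp_rule list \<Rightarrow> nat \<Rightarrow> nat \<Rightarrow> 'a list" where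
  "rX R q i = (case R ! i of Term _ \<Rightarrow> [] | NT l r \<Rightarrow>
      substr (deriv R i) (Suc (length (deriv R l)) - q)
                         (min (length (deriv R l) + q - 2) (length (deriv R i) - 1)))"

definition qual_rules :: "'a slp_rule list \<Rightarrow> nat \<Rightarrow> nat set" where
  "qual_rules R q = {i. i < length R \<and> (\<exists>l r. R ! i = NT l r) \<and> length (deriv R i) \<ge> q}"

text \<open>A graph: set of nodes (fingerprints) and edges (u,v) \<mapsto> (label, counter);
  at most one edge per direction.\<close>
type_synonym ('a, 'f) graph = "'f set \<times> ('f \<times> 'f \<Rightarrow> ('a \<times> nat) option)"

definition add_edge :: "('f \<Rightarrow> 'f \<Rightarrow> 'a \<Rightarrow> nat \<Rightarrow> ('a,'f) graph \<Rightarrow> ('a,'f) graph)" where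
  "add_edge u v c m G = (let (N, E) = G;
       E1 = (case E (u, v) of None \<Rightarrow> E((u, v) \<mapsto> (c, 0)) | Some _ \<Rightarrow> E);
       E2 = E1((u, v) := map_option (\<lambda>(c', k). (c', k + m)) (E1 (u, v)))
     in (insert v N, E2))"

definition process_rule :: "('a list \<Rightarrow> 'f) \<Rightarrow> nat \<Rightarrow> nat \<Rightarrow> 'a list \<Rightarrow> ('a,'f) graph \<Rightarrow> ('a,'f) graph" where
  "process_rule \<phi> q m r G =
     foldl (\<lambda>H j. add_edge (\<phi> (substr r (j - 1) (j + q - 3))) (\<phi> (substr r j (j + q - 2)))
                            (r ! (j + q - 2)) m H)
           (insert (\<phi> (substr r 0 (q - 2))) (fst G), snd G)
           [1..<length r - q + 2]"

definition build_graph :: "'a slp_rule list \<Rightarrow> nat \<Rightarrow> ('a list \<Rightarrow> 'f) \<Rightarrow> nat list \<Rightarrow> ('a,'f) graph" where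
  "build_graph R q \<phi> ord = foldl (\<lambda>G i. process_rule \<phi> q (occ R i) (rX R q i) G) ({}, Map.empty) ord"

text \<open>Tree nodes are numbered 0,1,..,length C; node 0 is the root u_0 and node k+1 is
  described by entry k = (parent, edge label, counter, node label).\<close>
type_synonym ('a, 'f) cstree = "(nat \<times> 'a \<times> nat option \<times> 'f option) list"

text \<open>The initial path u_0 \<rightarrow> ... \<rightarrow> u_{q-1}; node u_j is number j.\<close>
definition init_path :: "'a list \<Rightarrow> nat \<Rightarrow> ('a list \<Rightarrow> 'f) \<Rightarrow> ('a,'f) cstree" where
  "init_path T q \<phi> = map (\<lambda>j. (j, T ! j, None,
       if j = q - 2 then Some (\<phi> (substr T 0 (q - 2))) else None)) [0..<q - 1]"

text \<open>Depth-first traversal (any order of exploring the out-edges).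
  dfs E x p (V,C) (V',C'): the graph node x (already marked visited) with tree node p=\<tau>(x)
  is explored, turning visited set V and tree C into V' and C'.\<close>
inductive dfs :: "('f \<times> 'f \<Rightarrow> ('a \<times> nat) option) \<Rightarrow> 'f \<Rightarrow> nat \<Rightarrow>
                   'f set \<times> ('a,'f) cstree \<Rightarrow> 'f set \<times> ('a,'f) cstree \<Rightarrow> bool"
  and explore :: "('f \<times> 'f \<Rightarrow> ('a \<times> nat) option) \<Rightarrow> nat \<Rightarrow> ('f \<times> 'a \<times> nat) list \<Rightarrow>
                   'f set \<times> ('a,'f) cstree \<Rightarrow> 'f set \<times> ('a,'f) cstree \<Rightarrow> bool"
  for E where
  dfs_node: "distinct es \<Longrightarrow> set es = {(y, c, m). E (x, y) = Some (c, m)} \<Longrightarrow>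
     explore E p es s s' \<Longrightarrow> dfs E x p s s'"
| explore_nil: "explore E p [] s s"
| explore_new: "y \<notin> V \<Longrightarrow>
     dfs E y (Suc (length C)) (insert y V, C @ [(p, c, Some m, Some y)]) s2 \<Longrightarrow>
     explore E p es s2 s3 \<Longrightarrow> explore E p ((y, c, m) # es) (V, C) s3"
| explore_visited: "y \<in> V \<Longrightarrow>
     explore E p es (V, C @ [(p, c, Some m, Some y)]) s3 \<Longrightarrow> explore E p ((y, c, m) # es) (V, C) s3"

text \<open>The string w_v of edge labels from v up to the root (fuel-bounded; parents have
  smaller numbers).\<close>
fun up_string :: "nat \<Rightarrow> ('a,'f) cstree \<Rightarrow> nat \<Rightarrow> 'a list" where
  "up_string 0 C v = []"
| "up_string (Suc f) C v = (if v = 0 \<or> length C < v then [] else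
      (case C ! (v - 1) of (p, c, _, _) \<Rightarrow> c # up_string f C p))"

definition w_str :: "('a,'f) cstree \<Rightarrow> nat \<Rightarrow> 'a list" where
  "w_str C v = up_string v C v"

text \<open>The strings w_v\$ over the alphabet extended by the terminal None = \$.\<close>
definition suffix_strings :: "('a,'f) cstree \<Rightarrow> 'a option list set" where
  "suffix_strings C = {map Some (w_str C v) @ [None] | v. v \<le> length C}"

text \<open>Nodes of the compact trie of a set S of strings, identified with their path labels:
  the root, the leaves (the strings of S) and the branching nodes.\<close>
definition ctrie_nodes :: "'b list set \<Rightarrow> 'b list set" where
  "ctrie_nodes S = {[]} \<union> S \<union>
     {x. \<exists>a b. a \<noteq> b \<and> (\<exists>s\<in>S. prefix (x @ [a]) s) \<and> (\<exists>s\<in>S. prefix (x @ [b]) s)}"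

definition ctrie_leaf :: "'b list set \<Rightarrow> 'b list \<Rightarrow> bool" where
  "ctrie_leaf S x \<longleftrightarrow> x \<in> ctrie_nodes S \<and> \<not> (\<exists>y \<in> ctrie_nodes S. strict_prefix x y)"

definition sdepth :: "'b list \<Rightarrow> nat" where
  "sdepth x = length x"

end

theory Submission
  imports Defs
begin


lemma foldl_snoc_nth:
  fixes f :: "'b list \<Rightarrow> 'a \<Rightarrow> 'b"
  shows "length (foldl (\<lambda>acc rl. acc @ [f acc rl]) [] xs) = length xs \<and>
    (\<forall>j < length xs. foldl (\<lambda>acc rl. acc @ [f acc rl]) [] xs ! j
        = f (take j (foldl (\<lambda>acc rl. acc @ [f acc rl]) [] xs)) (xs ! j))"
proof (induction xs rule: rev_induct)
  case Nil then show ?case by simp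
next
  case (snoc x xs)
  define F where "F = foldl (\<lambda>acc rl. acc @ [f acc rl]) [] xs"
  have e: "foldl (\<lambda>acc rl. acc @ [f acc rl]) [] (xs @ [x]) = F @ [f F x]" unfolding F_def by simp
  have IH: "length F = length xs" "\<And>j. j < length xs \<Longrightarrow> F ! j = f (take j F) (xs ! j)"
    using snoc unfolding F_def by auto
  show ?case unfolding e
  proof (intro conjI allI impI)
    show "length (F @ [f F x]) = length (xs @ [x])" using IH by simp
    fix j assume j: "j < length (xs @ [x])"
    show "(F @ [f F x]) ! j = f (take j (F @ [f F x])) ((xs @ [x]) ! j)"
    proof (cases "j < length xs")
      case True then show ?thesis using IH by (simp add: nth_append)
    next
      case False then have "j = length xs" using j by simp
      then show ?thesis using IH by (simp add: nth_append)
    qed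
  qed
qed

lemma derivs_len: "length (derivs R) = length R"
  unfolding derivs_def by (rule conjunct1[OF foldl_snoc_nth])

lemma derivs_nth: "j < length R \<Longrightarrow> derivs R ! j =
   (case R ! j of Term a \<Rightarrow> [a] | NT l r \<Rightarrow> take j (derivs R) ! l @ take j (derivs R) ! r)"
  unfolding derivs_def by (rule conjunct2[OF foldl_snoc_nth, rule_format])

lemma deriv_NT: "wf_slp R \<Longrightarrow> i < length R \<Longrightarrow> R ! i = NT l r \<Longrightarrow> deriv R i = deriv R l @ deriv R r"
  unfolding deriv_def wf_slp_def using derivs_nth[of i R] by auto

lemma deriv_Term: "i < length R \<Longrightarrow> R ! i = Term a \<Longrightarrow> deriv R i = [a]"
  unfolding deriv_def using derivs_nth[of i R] by auto

lemma occ_counts_nth: "wf_slp R \<Longrightarrow> j < length R \<Longrightarrow> (occ_counts R ! j) i =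
   (if i = j then 1 else 0) + (case R ! j of Term _ \<Rightarrow> 0 | NT l r \<Rightarrow> (occ_counts R ! l) i + (occ_counts R ! r) i)"
proof -
  assume wf: "wf_slp R" and j: "j < length R"
  let ?f = "\<lambda>acc rl. \<lambda>i. (if i = length acc then 1 else 0) +
       (case rl of Term _ \<Rightarrow> 0 | NT l r \<Rightarrow> (acc ! l) i + (acc ! r) i)"
  have h: "length (occ_counts R) = length R \<and> (\<forall>j < length R. occ_counts R ! j = ?f (take j (occ_counts R)) (R ! j))"
    unfolding occ_counts_def by (rule foldl_snoc_nth)
  show ?thesis using h j wf unfolding wf_slp_def
    by (cases "R ! j") (auto simp: min_def)
qed

lemma deriv_ne: "wf_slp R \<Longrightarrow> j < length R \<Longrightarrow> deriv R j \<noteq> []"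
proof (induction j rule: less_induct)
  case (less j)
  show ?case
  proof (cases "R ! j")
    case (Term a) then show ?thesis using deriv_Term[OF less(3) Term] by simp
  next
    case (NT l r)
    then have "l < j" using less unfolding wf_slp_def by auto
    then show ?thesis using less NT deriv_NT[OF less(2,3) NT] by auto
  qed
qed

lemma occ_sub: "wf_slp R \<Longrightarrow> j < length R \<Longrightarrow> (occ_counts R ! j) i > 0 \<Longrightarrow> sublist (deriv R i) (deriv R j)"
proof (induction j rule: less_induct)
  case (less j)
  show ?case
  proof (cases "i = j")
    case True then show ?thesis by simp
  next
    case False
    show ?thesis
    proof (cases "R ! j")
      case (Term a) then show ?thesis using occ_counts_nth[OF less(2,3), of i] False less(4) by simp
    next
      case (NT l r)
      then have lr: "l < j" "r < j" using less unfolding wf_slp_def by auto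
      have d: "deriv R j = deriv R l @ deriv R r" using deriv_NT[OF less(2,3) NT] .
      have "(occ_counts R ! l) i > 0 \<or> (occ_counts R ! r) i > 0"
        using occ_counts_nth[OF less(2,3), of i] False less(4) NT by simp
      then show ?thesis
      proof
        assume "(occ_counts R ! l) i > 0"
        then have "sublist (deriv R i) (deriv R l)" using less lr by auto
        then show ?thesis unfolding d by (meson sublist_append_rightI sublist_order.order.trans)
      next
        assume "(occ_counts R ! r) i > 0"
        then have "sublist (deriv R i) (deriv R r)" using less lr by auto
        then show ?thesis unfolding d by (meson sublist_append_leftI sublist_order.order.trans)
      qed
    qed
  qed
qed

lemma deriv_sub_text: "wf_slp R \<Longrightarrow> occ R i > 0 \<Longrightarrow> sublist (deriv R i) (slp_text R)"
  unfolding occ_def slp_text_def wf_slp_def using occ_sub[of R "length R - 1" i] wf_slp_def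
  by (metis diff_less length_greater_0_conv less_numeral_extra(1))



definition gram :: "'a list \<Rightarrow> nat \<Rightarrow> 'a list \<Rightarrow> bool" where
  "gram T q g \<longleftrightarrow> sublist g T \<and> length g = q - 1"

definition GI :: "'a list \<Rightarrow> nat \<Rightarrow> ('a list \<Rightarrow> 'f) \<Rightarrow> ('f \<times> 'f \<Rightarrow> ('a \<times> nat) option) \<Rightarrow> bool" where
  "GI T q \<phi> E \<longleftrightarrow> (\<forall>u w c m. E (u, w) = Some (c, m) \<longrightarrow>
     (\<exists>a. gram T q a \<and> gram T q (tl a @ [c]) \<and> u = \<phi> a \<and> w = \<phi> (tl a @ [c])))"

lemma add_edge_GI:
  assumes "GI T q \<phi> (snd G)"
    and "gram T q a" "gram T q (tl a @ [c])" "u = \<phi> a" "w = \<phi> (tl a @ [c])"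
  shows "GI T q \<phi> (snd (add_edge u w c m G))"
proof -
  obtain N E where G: "G = (N, E)" by (cases G)
  show ?thesis using assms unfolding G add_edge_def GI_def Let_def
    by (auto split: option.splits if_splits)
qed

lemma window:
  assumes "q \<ge> 2" "1 \<le> j" "j + q - 2 < length r"
  shows "substr r j (j + q - 2) = tl (substr r (j - 1) (j + q - 3)) @ [r ! (j + q - 2)]"
    and "length (substr r (j - 1) (j + q - 3)) = q - 1"
proof -
  have a: "substr r (j - 1) (j + q - 3) = take (q - 1) (drop (j - 1) r)"
  proof -
    have "Suc (j + q - 3) - (j - 1) = q - 1" using assms by arith
    then show ?thesis unfolding substr_def by simp
  qed
  have b: "substr r j (j + q - 2) = take (q - 1) (drop j r)"
  proof -
    have "Suc (j + q - 2) - j = q - 1" using assms by arith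
    then show ?thesis unfolding substr_def by simp
  qed
  have d: "drop (j - 1) r = r ! (j - 1) # drop j r"
  proof -
    have "j - 1 < length r" "Suc (j - 1) = j" using assms by arith+
    then show ?thesis using Cons_nth_drop_Suc[of "j - 1" r] by simp
  qed
  have q1: "q - 1 = Suc (q - 2)" using assms by simp
  have t: "take (q - 1) (drop j r) = take (q - 2) (drop j r) @ [drop j r ! (q - 2)]"
    unfolding q1 using assms by (intro take_Suc_conv_app_nth) simp
  have n: "drop j r ! (q - 2) = r ! (j + q - 2)" using assms by simp
  show "substr r j (j + q - 2) = tl (substr r (j - 1) (j + q - 3)) @ [r ! (j + q - 2)]"
    unfolding a b d q1 using t n q1 by simp
  show "length (substr r (j - 1) (j + q - 3)) = q - 1"
    unfolding a using assms by simp
qed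

lemma substr_sublist: "sublist (substr r i j) r"
  unfolding substr_def by (meson sublist_drop sublist_take sublist_order.order.trans)

lemma process_rule_GI:
  assumes q: "q \<ge> 2" and r: "sublist r T" and len: "length r \<ge> q" and G: "GI T q \<phi> (snd G)"
  shows "GI T q \<phi> (snd (process_rule \<phi> q m r G))"
proof -
  define step where "step = (\<lambda>H j. add_edge (\<phi> (substr r (j - 1) (j + q - 3))) (\<phi> (substr r j (j + q - 2)))
                            (r ! (j + q - 2)) m H)"
  have main: "\<And>H. set js \<subseteq> set [1..<length r - q + 2] \<Longrightarrow> GI T q \<phi> (snd H) \<Longrightarrow> GI T q \<phi> (snd (foldl step H js))" for js
  proof (induction js)
    case Nil then show ?case by simp
  next
    case (Cons j js)
    have j: "1 \<le> j" "j + q - 2 < length r" using Cons.prems(1) len q by auto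
    let ?a = "substr r (j - 1) (j + q - 3)"
    have w: "substr r j (j + q - 2) = tl ?a @ [r ! (j + q - 2)]" "length ?a = q - 1"
      using window[OF q j] by auto
    have ga: "gram T q ?a" unfolding gram_def using w(2) substr_sublist r
      by (meson sublist_order.order.trans)
    have gb: "gram T q (tl ?a @ [r ! (j + q - 2)])" unfolding gram_def
    proof
      show "sublist (tl ?a @ [r ! (j + q - 2)]) T" unfolding w(1)[symmetric]
        using substr_sublist r by (meson sublist_order.order.trans)
      show "length (tl ?a @ [r ! (j + q - 2)]) = q - 1" using w(2) q by simp
    qed
    have "GI T q \<phi> (snd (step H j))" unfolding step_def
      by (rule add_edge_GI[OF Cons.prems(2) ga gb refl]) (simp add: w(1))
    then show ?case using Cons by simp
  qed
  show ?thesis unfolding process_rule_def step_def[symmetric]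
    by (rule main) (use G in auto)
qed

lemma rX_props:
  assumes q: "q \<ge> 2" and wf: "wf_slp R" and i: "i \<in> qual_rules R q" and occ: "occ R i > 0"
  shows "sublist (rX R q i) (slp_text R)" "length (rX R q i) \<ge> q"
proof -
  obtain l r where NT: "R ! i = NT l r" and il: "i < length R" and lenX: "length (deriv R i) \<ge> q"
    using i unfolding qual_rules_def by auto
  have lr: "l < i" "r < i" using wf NT il unfolding wf_slp_def by auto
  have X: "deriv R i = deriv R l @ deriv R r" using deriv_NT[OF wf il NT] .
  have ne: "deriv R l \<noteq> []" "deriv R r \<noteq> []" using deriv_ne[OF wf] lr il by auto
  have rx: "rX R q i = substr (deriv R i) (Suc (length (deriv R l)) - q)
                         (min (length (deriv R l) + q - 2) (length (deriv R i) - 1))"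
    unfolding rX_def NT by simp
  show "sublist (rX R q i) (slp_text R)" unfolding rx
    using substr_sublist deriv_sub_text[OF wf occ] by (meson sublist_order.order.trans)
  have L: "length (deriv R l) \<ge> 1" "length (deriv R r) \<ge> 1" using ne by (auto simp: Suc_le_eq)
  have LX: "length (deriv R i) = length (deriv R l) + length (deriv R r)" using X by simp
  show "length (rX R q i) \<ge> q" unfolding rx substr_def using L LX lenX q
    by (simp add: min_def) arith
qed

lemma build_graph_GI:
  assumes q: "q \<ge> 2" and wf: "wf_slp R" and occ: "\<forall>i < length R. occ R i > 0"
    and ord: "set ord = qual_rules R q"
  shows "GI (slp_text R) q \<phi> (snd (build_graph R q \<phi> ord))"
proof -
  have "\<And>G. set js \<subseteq> qual_rules R q \<Longrightarrow> GI (slp_text R) q \<phi> (snd G) \<Longrightarrow>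
     GI (slp_text R) q \<phi> (snd (foldl (\<lambda>G i. process_rule \<phi> q (occ R i) (rX R q i) G) G js))" for js
  proof (induction js)
    case Nil then show ?case by simp
  next
    case (Cons i js)
    have ii: "i \<in> qual_rules R q" using Cons by auto
    then have "occ R i > 0" using occ unfolding qual_rules_def by auto
    then have "GI (slp_text R) q \<phi> (snd (process_rule \<phi> q (occ R i) (rX R q i) G))"
      using process_rule_GI[OF q rX_props[OF q wf ii] Cons.prems(2)] rX_props[OF q wf ii] by blast
    then show ?case using Cons by simp
  qed
  moreover have "GI (slp_text R) q \<phi> (snd ({}, Map.empty))" unfolding GI_def by simp
  ultimately show ?thesis unfolding build_graph_def using ord by blast
qed

lemma GI_next:
  assumes "GI T q \<phi> E" "gram T q a" "E (\<phi> a, y) = Some (c, m)"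
    and CF: "\<forall>x y. sublist x T \<longrightarrow> sublist y T \<longrightarrow>
               length x = q - 1 \<longrightarrow> length y = q - 1 \<longrightarrow> \<phi> x = \<phi> y \<longrightarrow> x = y"
  shows "y = \<phi> (tl a @ [c]) \<and> gram T q (tl a @ [c])"
proof -
  obtain a' where a': "gram T q a'" "gram T q (tl a' @ [c])" "\<phi> a = \<phi> a'" "y = \<phi> (tl a' @ [c])"
    using assms(1,3) unfolding GI_def by blast
  have "a = a'" using CF a' assms(2) unfolding gram_def by blast
  then show ?thesis using a' by simp
qed



definition lab :: "('a,'f) cstree \<Rightarrow> nat \<Rightarrow> 'f option" where
  "lab C v = (if v = 0 \<or> length C < v then None else snd (snd (snd (C ! (v - 1)))))"

definition pr :: "('a,'f) cstree \<Rightarrow> nat \<Rightarrow> 'f option \<times> 'f option" where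
  "pr C k = (lab C (fst (C ! k)), snd (snd (snd (C ! k))))"

fun INV :: "('f \<times> 'f \<Rightarrow> ('a \<times> nat) option) \<Rightarrow> 'f \<Rightarrow> nat \<Rightarrow> ('f \<Rightarrow> bool) \<Rightarrow>
   'f set \<times> ('a,'f) cstree \<Rightarrow> 'f set \<times> ('a,'f) cstree \<Rightarrow> bool" where
  "INV E x p Y (V, C) (V', C') \<longleftrightarrow>
    V \<subseteq> V' \<and> length C \<le> length C' \<and> take (length C) C' = C \<and>
    (\<forall>k. length C \<le> k \<and> k < length C' \<longrightarrow>
       (fst (C' ! k) = p \<or> (length C < fst (C' ! k) \<and> fst (C' ! k) \<le> k)) \<and>
       (\<exists>xx c m y. lab C' (fst (C' ! k)) = Some xx \<and> C' ! k = (fst (C' ! k), c, Some m, Some y) \<and>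
          E (xx, y) = Some (c, m) \<and> (xx = x \<or> xx \<in> V' - V) \<and> (xx = x \<longrightarrow> Y y))) \<and>
    inj_on (pr C') {length C..<length C'}"

lemma take_nth_ext: "take (length C) C' = C \<Longrightarrow> k < length C \<Longrightarrow> C' ! k = C ! k"
  by (metis nth_take)

lemma lab_ext: "take (length C) C' = C \<Longrightarrow> length C \<le> length C' \<Longrightarrow> v \<le> length C \<Longrightarrow> lab C' v = lab C v"
  unfolding lab_def using take_nth_ext[of C C' "v - 1"] by auto

lemma take_trans: "take (length C) C1 = C \<Longrightarrow> take (length C1) C2 = C1 \<Longrightarrow> length C \<le> length C1 \<Longrightarrow>
   take (length C) C2 = C"
  by (metis min.absorb1 take_take)

lemma inj_on_Un_disj: "inj_on f A \<Longrightarrow> inj_on f B \<Longrightarrow> f ` A \<inter> f ` B = {} \<Longrightarrow> inj_on f (A \<union> B)"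
  by (auto simp: inj_on_Un)

lemma disj_sub: "A \<subseteq> P \<Longrightarrow> B \<subseteq> Q \<Longrightarrow> P \<inter> Q = {} \<Longrightarrow> A \<inter> B = {}"
  by blast

lemma INV_mono: "INV E x p Y s s' \<Longrightarrow> (\<And>y. Y y \<Longrightarrow> Y' y) \<Longrightarrow> INV E x p Y' s s'"
  by (cases s; cases s') (simp, blast)

lemma dfs_INV:
  shows "dfs E x p s s' \<Longrightarrow> (\<And>V C. s = (V, C) \<Longrightarrow> x \<in> V \<Longrightarrow> 0 < p \<Longrightarrow> p \<le> length C \<Longrightarrow>
            lab C p = Some x \<Longrightarrow> INV E x p (\<lambda>_. True) s s')"
    and "explore E p es s s' \<Longrightarrow> (\<And>x V C. s = (V, C) \<Longrightarrow> x \<in> V \<Longrightarrow> 0 < p \<Longrightarrow> p \<le> length C \<Longrightarrow>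
            lab C p = Some x \<Longrightarrow> (\<forall>(y, c, m) \<in> set es. E (x, y) = Some (c, m)) \<Longrightarrow>
            distinct (map fst es) \<Longrightarrow> INV E x p (\<lambda>y. y \<in> fst ` set es) s s')"
proof (induction rule: dfs_explore.inducts)
  case (dfs_node es x p s s')
  have d: "distinct (map fst es)" unfolding distinct_map
  proof
    show "distinct es" by fact
    show "inj_on fst (set es)" using dfs_node(2) by (auto simp: inj_on_def)
  qed
  have "\<forall>(y, c, m) \<in> set es. E (x, y) = Some (c, m)" using dfs_node(2) by auto
  then have "INV E x p (\<lambda>y. y \<in> fst ` set es) s s'" using dfs_node d by blast
  then show ?case by (rule INV_mono) simp
next
  case (explore_nil p s)
  then show ?case by simp
next
  case (explore_visited y V0 p es C0 c m s3)
  obtain V3 C3 where s3: "s3 = (V3, C3)" by (cases s3)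
  note st = explore_visited.prems(1) and x = explore_visited.prems(2) and p = explore_visited.prems(3,4)
    and lp = explore_visited.prems(5) and es = explore_visited.prems(6) and dist = explore_visited.prems(7)
  have VC: "V = V0" "C = C0" using st by auto
  define C1 where "C1 = C @ [(p, c, Some m, Some y)]"
  have lp1: "lab C1 p = Some x" using lab_ext[of C C1 p] lp p VC unfolding C1_def by simp
  have I: "INV E x p (\<lambda>y. y \<in> fst ` set es) (V, C1) s3"
    unfolding C1_def VC by (rule explore_visited.IH) (use x p lp1 es dist VC in \<open>auto simp: C1_def\<close>)
  then have I1: "V \<subseteq> V3" "length C1 \<le> length C3" "take (length C1) C3 = C1"
    and I2: "\<And>k. length C1 \<le> k \<Longrightarrow> k < length C3 \<Longrightarrow>
       (fst (C3 ! k) = p \<or> (length C1 < fst (C3 ! k) \<and> fst (C3 ! k) \<le> k)) \<and>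
       (\<exists>xx c m y'. lab C3 (fst (C3 ! k)) = Some xx \<and> C3 ! k = (fst (C3 ! k), c, Some m, Some y') \<and>
          E (xx, y') = Some (c, m) \<and> (xx = x \<or> xx \<in> V3 - V) \<and> (xx = x \<longrightarrow> y' \<in> fst ` set es))"
    and I3: "inj_on (pr C3) {length C1..<length C3}"
    unfolding s3 by auto
  have L1: "length C1 = Suc (length C)" unfolding C1_def by simp
  have tk: "take (length C) C3 = C"
  proof (rule take_trans[OF _ I1(3)])
    show "take (length C) C1 = C" unfolding C1_def by simp
    show "length C \<le> length C1" using L1 by simp
  qed
  have e0: "C3 ! length C = (p, c, Some m, Some y)" using take_nth_ext[OF I1(3)] L1 unfolding C1_def by simp
  have lp3: "lab C3 p = Some x" using lab_ext[OF tk _ ] lp p VC I1 L1 by simp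
  have Exy: "E (x, y) = Some (c, m)" using es by auto
  have yn: "y \<notin> fst ` set es" using dist by simp
  have pr0: "pr C3 (length C) = (Some x, Some y)" unfolding pr_def e0 using lp3 by simp
  have rng: "{length C..<length C3} = insert (length C) {length C1..<length C3}" using L1 I1 by auto
  have A: "\<forall>k. length C \<le> k \<and> k < length C3 \<longrightarrow>
       (fst (C3 ! k) = p \<or> (length C < fst (C3 ! k) \<and> fst (C3 ! k) \<le> k)) \<and>
       (\<exists>xx c m y'. lab C3 (fst (C3 ! k)) = Some xx \<and> C3 ! k = (fst (C3 ! k), c, Some m, Some y') \<and>
          E (xx, y') = Some (c, m) \<and> (xx = x \<or> xx \<in> V3 - V) \<and> (xx = x \<longrightarrow> y' \<in> fst ` set ((y, c, m) # es)))"
  proof (intro allI impI)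
    fix k assume k: "length C \<le> k \<and> k < length C3"
    show "(fst (C3 ! k) = p \<or> (length C < fst (C3 ! k) \<and> fst (C3 ! k) \<le> k)) \<and>
       (\<exists>xx c m y'. lab C3 (fst (C3 ! k)) = Some xx \<and> C3 ! k = (fst (C3 ! k), c, Some m, Some y') \<and>
          E (xx, y') = Some (c, m) \<and> (xx = x \<or> xx \<in> V3 - V) \<and> (xx = x \<longrightarrow> y' \<in> fst ` set ((y, c, m) # es)))"
    proof (cases "k = length C")
      case True then show ?thesis using e0 lp3 Exy by simp
    next
      case False then show ?thesis using I2[of k] k L1 by fastforce
    qed
  qed
  have inj: "inj_on (pr C3) {length C..<length C3}" unfolding rng
    proof (rule inj_on_insert[THEN iffD2], intro conjI)
      show "inj_on (pr C3) {length C1..<length C3}" by fact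
      show "pr C3 (length C) \<notin> pr C3 ` ({length C1..<length C3} - {length C})"
      proof
        assume "pr C3 (length C) \<in> pr C3 ` ({length C1..<length C3} - {length C})"
        then obtain k where k0: "k \<in> {length C1..<length C3} - {length C}" and pk0: "pr C3 (length C) = pr C3 k"
          using L1 by (auto simp: image_iff)
        have k: "length C1 \<le> k" "k < length C3" using k0 by auto
        have pk: "pr C3 k = (Some x, Some y)" using pk0 pr0 by simp
        obtain xx c' m' y' where h: "lab C3 (fst (C3 ! k)) = Some xx" "C3 ! k = (fst (C3 ! k), c', Some m', Some y')"
          "xx = x \<longrightarrow> y' \<in> fst ` set es" using I2[OF k] by blast
        have "xx = x" "y' = y" using pk h unfolding pr_def by (metis Pair_inject option.inject snd_conv)+
        then show False using h yn by simp
      qed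
    qed
  show ?case unfolding s3 VC[symmetric] INV.simps
    using I1 L1 tk A inj by simp
next
  case (explore_new y V0 C0 p c m s2 es s3)
  obtain V2 C2 where s2: "s2 = (V2, C2)" by (cases s2)
  obtain V3 C3 where s3: "s3 = (V3, C3)" by (cases s3)
  note st = explore_new.prems(1) and x = explore_new.prems(2) and p = explore_new.prems(3,4)
    and lp = explore_new.prems(5) and es = explore_new.prems(6) and dist = explore_new.prems(7)
  have VC: "V = V0" "C = C0" using st by auto
  have yV: "y \<notin> V" using explore_new.hyps(1) VC by simp
  define C1 where "C1 = C @ [(p, c, Some m, Some y)]"
  have L1: "length C1 = Suc (length C)" unfolding C1_def by simp
  have tk1: "take (length C) C1 = C" unfolding C1_def by simp
  have lp1: "lab C1 (Suc (length C)) = Some y" unfolding C1_def lab_def by simp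
  have J: "INV E y (Suc (length C)) (\<lambda>_. True) (insert y V, C1) s2"
    unfolding C1_def VC by (rule explore_new.IH(2)) (use lp1 in \<open>auto simp: C1_def VC\<close>)
  then have J1: "insert y V \<subseteq> V2" "length C1 \<le> length C2" "take (length C1) C2 = C1"
    and J2: "\<And>k. length C1 \<le> k \<Longrightarrow> k < length C2 \<Longrightarrow>
       (fst (C2 ! k) = Suc (length C) \<or> (length C1 < fst (C2 ! k) \<and> fst (C2 ! k) \<le> k)) \<and>
       (\<exists>xx c m y'. lab C2 (fst (C2 ! k)) = Some xx \<and> C2 ! k = (fst (C2 ! k), c, Some m, Some y') \<and>
          E (xx, y') = Some (c, m) \<and> (xx = y \<or> xx \<in> V2 - insert y V))"
    and J3: "inj_on (pr C2) {length C1..<length C2}"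
    unfolding s2 by auto
  have tk2: "take (length C) C2 = C" using take_trans[OF tk1 J1(3)] L1 by simp
  have lp2: "lab C2 p = Some x" using lab_ext[OF tk2] J1 L1 lp p by simp
  have I: "INV E x p (\<lambda>y. y \<in> fst ` set es) s2 s3"
    by (rule explore_new.IH(4)[of V2 C2 x]) (use s2 x J1 p lp2 es dist L1 in auto)
  then have I1: "V2 \<subseteq> V3" "length C2 \<le> length C3" "take (length C2) C3 = C2"
    and I2: "\<And>k. length C2 \<le> k \<Longrightarrow> k < length C3 \<Longrightarrow>
       (fst (C3 ! k) = p \<or> (length C2 < fst (C3 ! k) \<and> fst (C3 ! k) \<le> k)) \<and>
       (\<exists>xx c m y'. lab C3 (fst (C3 ! k)) = Some xx \<and> C3 ! k = (fst (C3 ! k), c, Some m, Some y') \<and>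
          E (xx, y') = Some (c, m) \<and> (xx = x \<or> xx \<in> V3 - V2) \<and> (xx = x \<longrightarrow> y' \<in> fst ` set es))"
    and I3: "inj_on (pr C3) {length C2..<length C3}"
    unfolding s2 s3 by auto
  have tk: "take (length C) C3 = C" using take_trans[OF tk2 I1(3)] J1 L1 by simp
  have tk13: "take (length C1) C3 = C1" using take_trans[OF J1(3) I1(3)] J1 by simp
  have e0: "C3 ! length C = (p, c, Some m, Some y)" using take_nth_ext[OF tk13] L1 unfolding C1_def by simp
  have lp3: "lab C3 p = Some x" using lab_ext[OF tk] lp p I1 J1 L1 by simp
  have Exy: "E (x, y) = Some (c, m)" using es by auto
  have yn: "y \<notin> fst ` set es" using dist by simp
  have xV: "x \<in> V" using x VC by simp
  have pr0: "pr C3 (length C) = (Some x, Some y)" unfolding pr_def e0 using lp3 by simp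
  have C32: "\<And>k. k < length C2 \<Longrightarrow> C3 ! k = C2 ! k" using take_nth_ext[OF I1(3)] by simp
  have labB: "\<And>v. v \<le> length C2 \<Longrightarrow> lab C3 v = lab C2 v" using lab_ext[OF I1(3) I1(2)] by simp
  have B: "\<And>k. length C1 \<le> k \<Longrightarrow> k < length C2 \<Longrightarrow>
       (length C < fst (C3 ! k) \<and> fst (C3 ! k) \<le> k) \<and>
       (\<exists>xx c m y'. lab C3 (fst (C3 ! k)) = Some xx \<and> C3 ! k = (fst (C3 ! k), c, Some m, Some y') \<and>
          E (xx, y') = Some (c, m) \<and> xx \<in> V2 - V \<and> V2 \<subseteq> V3) \<and> pr C3 k = pr C2 k"
  proof -
    fix k assume k: "length C1 \<le> k" "k < length C2"
    have par: "length C < fst (C2 ! k) \<and> fst (C2 ! k) \<le> k" using J2[OF k] L1 k by auto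
    have lb: "lab C3 (fst (C2 ! k)) = lab C2 (fst (C2 ! k))" using labB par k by simp
    show "(length C < fst (C3 ! k) \<and> fst (C3 ! k) \<le> k) \<and>
       (\<exists>xx c m y'. lab C3 (fst (C3 ! k)) = Some xx \<and> C3 ! k = (fst (C3 ! k), c, Some m, Some y') \<and>
          E (xx, y') = Some (c, m) \<and> xx \<in> V2 - V \<and> V2 \<subseteq> V3) \<and> pr C3 k = pr C2 k"
      unfolding C32[OF k(2)] pr_def lb using par J2[OF k] J1 I1 yV by auto
  qed
  have A: "\<forall>k. length C \<le> k \<and> k < length C3 \<longrightarrow>
       (fst (C3 ! k) = p \<or> (length C < fst (C3 ! k) \<and> fst (C3 ! k) \<le> k)) \<and>
       (\<exists>xx c m y'. lab C3 (fst (C3 ! k)) = Some xx \<and> C3 ! k = (fst (C3 ! k), c, Some m, Some y') \<and>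
          E (xx, y') = Some (c, m) \<and> (xx = x \<or> xx \<in> V3 - V) \<and> (xx = x \<longrightarrow> y' = y \<or> y' \<in> fst ` set es))"
  proof (intro allI impI)
    fix k assume k: "length C \<le> k \<and> k < length C3"
    show "(fst (C3 ! k) = p \<or> (length C < fst (C3 ! k) \<and> fst (C3 ! k) \<le> k)) \<and>
       (\<exists>xx c m y'. lab C3 (fst (C3 ! k)) = Some xx \<and> C3 ! k = (fst (C3 ! k), c, Some m, Some y') \<and>
          E (xx, y') = Some (c, m) \<and> (xx = x \<or> xx \<in> V3 - V) \<and> (xx = x \<longrightarrow> y' = y \<or> y' \<in> fst ` set es))"
    proof (cases "k = length C")
      case True then show ?thesis using e0 lp3 Exy by simp
    next
      case False
      show ?thesis
      proof (cases "k < length C2")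
        case True
        then have k': "length C1 \<le> k" using k False L1 by simp
        show ?thesis using B[OF k' True] xV by blast
      next
        case False
        then have k': "length C2 \<le> k" by simp
        have kk: "k < length C3" using k by simp
        have VV: "V \<subseteq> V2" "length C < length C2" using J1 L1 by auto
        obtain xx c' m' y' where h: "lab C3 (fst (C3 ! k)) = Some xx" "C3 ! k = (fst (C3 ! k), c', Some m', Some y')"
          "E (xx, y') = Some (c', m')" "xx = x \<or> xx \<in> V3 - V2" "xx = x \<longrightarrow> y' \<in> fst ` set es"
          using I2[OF k' kk] by blast
        have par: "fst (C3 ! k) = p \<or> (length C < fst (C3 ! k) \<and> fst (C3 ! k) \<le> k)"
          using I2[OF k' kk] VV by auto
        have "xx = x \<or> xx \<in> V3 - V" using h(4) VV by blast
        moreover have "xx = x \<longrightarrow> y' = y \<or> y' \<in> fst ` set es" using h(5) by auto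
        ultimately show ?thesis using par h(1-3) by blast
      qed
    qed
  qed
  have rng: "{length C..<length C3} = insert (length C) ({length C1..<length C2} \<union> {length C2..<length C3})"
    using L1 I1 J1 by auto
  have injB: "inj_on (pr C3) {length C1..<length C2}"
    using J3 B by (simp add: inj_on_def)
  have imB: "pr C3 ` {length C1..<length C2} \<subseteq> {(Some xx, yy) | xx yy. xx \<in> V2 - V}"
  proof
    fix z assume "z \<in> pr C3 ` {length C1..<length C2}"
    then obtain k where k: "length C1 \<le> k" "k < length C2" "z = pr C3 k" by auto
    obtain xx c' m' y' where h: "lab C3 (fst (C3 ! k)) = Some xx" "xx \<in> V2 - V"
      using B[OF k(1,2)] by blast
    have "z = (Some xx, snd (snd (snd (C3 ! k))))" using k(3) h unfolding pr_def by simp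
    then show "z \<in> {(Some xx, yy) | xx yy. xx \<in> V2 - V}" using h by blast
  qed
  have imC: "pr C3 ` {length C2..<length C3} \<subseteq> {(Some x, Some yy) | yy. yy \<in> fst ` set es} \<union> {(Some xx, yy) | xx yy. xx \<in> V3 - V2}"
  proof
    fix z assume "z \<in> pr C3 ` {length C2..<length C3}"
    then obtain k where k: "length C2 \<le> k" "k < length C3" "z = pr C3 k" by auto
    obtain xx c' m' y' where h: "lab C3 (fst (C3 ! k)) = Some xx" "C3 ! k = (fst (C3 ! k), c', Some m', Some y')"
          "xx = x \<or> xx \<in> V3 - V2" "xx = x \<longrightarrow> y' \<in> fst ` set es" using I2[OF k(1,2)] by blast
    have z: "z = (Some xx, Some y')" using k(3) h unfolding pr_def by (metis snd_conv)
    show "z \<in> {(Some x, Some yy) | yy. yy \<in> fst ` set es} \<union> {(Some xx, yy) | xx yy. xx \<in> V3 - V2}"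
      using h z by auto
  qed
  have inj: "inj_on (pr C3) {length C..<length C3}" unfolding rng
  proof (rule inj_on_insert[THEN iffD2], intro conjI)
    show "inj_on (pr C3) ({length C1..<length C2} \<union> {length C2..<length C3})"
    proof (rule inj_on_Un_disj[OF injB I3])
      show "pr C3 ` {length C1..<length C2} \<inter> pr C3 ` {length C2..<length C3} = {}"
      proof -
        have "{(Some xx, yy) | xx yy. xx \<in> V2 - V} \<inter>
          ({(Some x, Some yy) | yy. yy \<in> fst ` set es} \<union> {(Some xx, yy) | xx yy. xx \<in> V3 - V2}) = {}"
          using xV by auto
        then show ?thesis using disj_sub[OF imB imC] by blast
      qed
    qed
    have "(Some x, Some y) \<notin> {(Some xx, yy) | xx yy. xx \<in> V2 - V}" using xV by auto
    then have "pr C3 (length C) \<notin> pr C3 ` {length C1..<length C2}" using imB unfolding pr0 by blast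
    moreover have "(Some x, Some y) \<notin> {(Some x, Some yy) | yy. yy \<in> fst ` set es} \<union> {(Some xx, yy) | xx yy. xx \<in> V3 - V2}"
      using xV yn J1 by auto
    then have "pr C3 (length C) \<notin> pr C3 ` {length C2..<length C3}" using imC unfolding pr0 by blast
    ultimately show "pr C3 (length C) \<notin> pr C3 ` (({length C1..<length C2} \<union> {length C2..<length C3}) - {length C})"
      by blast
  qed
  show ?case unfolding s3 VC[symmetric] INV.simps
    using I1 J1 L1 tk A inj by auto
qed



lemma up_eq: "(\<forall>k<length C. fst (C ! k) \<le> k) \<Longrightarrow> v \<le> f \<Longrightarrow> v \<le> g \<Longrightarrow> up_string f C v = up_string g C v"
proof (induction f arbitrary: g v)
  case 0 then show ?case by (cases g) auto
next
  case (Suc f)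
  show ?case
  proof (cases "v = 0 \<or> length C < v")
    case True then show ?thesis using Suc by (cases g) auto
  next
    case False
    then obtain g' where g: "g = Suc g'" using Suc by (cases g) auto
    obtain p c x y where e: "C ! (v - 1) = (p, c, x, y)" by (cases "C ! (v - 1)") auto
    have "p \<le> v - 1" using Suc.prems(1) False e by (metis fst_conv diff_less less_le_trans not_le zero_less_one gr0I)
    then have "up_string f C p = up_string g' C p" using Suc g False by (intro Suc.IH) auto
    then show ?thesis using False e g by simp
  qed
qed

lemma w_str_Suc: "(\<forall>k<length C. fst (C ! k) \<le> k) \<Longrightarrow> k < length C \<Longrightarrow>
    w_str C (Suc k) = fst (snd (C ! k)) # w_str C (fst (C ! k))"
proof -
  assume P: "\<forall>k<length C. fst (C ! k) \<le> k" and k: "k < length C"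
  obtain p c x y where e: "C ! k = (p, c, x, y)" by (cases "C ! k") auto
  have "p \<le> k" using P k e by (metis fst_conv)
  then have u: "up_string k C p = up_string p C p" by (intro up_eq[OF P]) auto
  have "up_string (Suc k) C (Suc k) = c # up_string k C p" using e k by simp
  then show ?thesis unfolding w_str_def using e u by simp
qed

lemma w_str_0: "w_str C 0 = []" unfolding w_str_def by simp

lemma prefix_SomeNone: "prefix (map Some w @ [None]) (map Some w' @ [None]) \<Longrightarrow> w = w'"
proof (induction w arbitrary: w')
  case Nil then show ?case by (cases w') auto
next
  case (Cons a w)
  show ?case
  proof (cases w')
    case Nil then show ?thesis using Cons.prems by simp
  next
    case (Cons b w'')
    then have "a = b" "prefix (map Some w @ [None]) (map Some w'' @ [None])" using Cons.prems by simp_all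
    then show ?thesis using Cons.IH Cons by simp
  qed
qed

lemma prefix_same_next: "prefix (x @ [a]) s \<Longrightarrow> prefix (x @ [b]) s \<Longrightarrow> a = b"
  unfolding prefix_def by auto



theorem lemma9:
  fixes R :: "'a slp_rule list" and q :: nat and \<phi> :: "'a list \<Rightarrow> 'f"
    and ord :: "nat list" and V :: "'f set" and C :: "('a,'f) cstree"
  assumes "q \<ge> 2"
    and "wf_slp R"
    and "length (slp_text R) \<ge> q"
    and "\<forall>i < length R. occ R i > 0"
    and "\<forall>x y. sublist x (slp_text R) \<longrightarrow> sublist y (slp_text R) \<longrightarrow>
               length x = q - 1 \<longrightarrow> length y = q - 1 \<longrightarrow> \<phi> x = \<phi> y \<longrightarrow> x = y"
    and "distinct ord" and "set ord = qual_rules R q"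
    and "dfs (snd (build_graph R q \<phi> ord)) (\<phi> (substr (slp_text R) 0 (q - 2))) (q - 1)
           ({\<phi> (substr (slp_text R) 0 (q - 2))}, init_path (slp_text R) q \<phi>) (V, C)"
  shows "\<forall>v \<in> ctrie_nodes (suffix_strings C). sdepth v \<ge> q \<longrightarrow> ctrie_leaf (suffix_strings C) v"
proof -
  note q = assms(1) and wf = assms(2) and lenT = assms(3) and occ = assms(4) and CF = assms(5)
    and ord = assms(7) and D = assms(8)
  define T where "T = slp_text R"
  define E where "E = snd (build_graph R q \<phi> ord)"
  define g0 where "g0 = substr T 0 (q - 2)"
  define C0 where "C0 = init_path T q \<phi>"
  have GI: "GI T q \<phi> E" unfolding T_def E_def using build_graph_GI[OF q wf occ ord] .
  have g0: "g0 = take (q - 1) T"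
  proof -
    have "Suc (q - 2) - 0 = q - 1" using q by arith
    then show ?thesis unfolding g0_def substr_def by simp
  qed
  have gg0: "gram T q g0" unfolding gram_def g0 using lenT q T_def by simp
  have LC0: "length C0 = q - 1" unfolding C0_def init_path_def by simp
  have C0k: "\<And>k. k < q - 1 \<Longrightarrow> C0 ! k = (k, T ! k, None, if k = q - 2 then Some (\<phi> g0) else None)"
    unfolding C0_def init_path_def g0_def by simp
  have lab0: "lab C0 (q - 1) = Some (\<phi> g0)" unfolding lab_def LC0 using C0k[of "q - 2"] q
    by (simp add: Suc_diff_Suc numeral_2_eq_2)
  have INV: "INV E (\<phi> g0) (q - 1) (\<lambda>_. True) ({\<phi> g0}, C0) (V, C)"
  proof -
    have D': "dfs E (\<phi> g0) (q - 1) ({\<phi> g0}, C0) (V, C)" using D unfolding T_def E_def g0_def C0_def by simp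
    show ?thesis using dfs_INV(1)[OF D', of "{\<phi> g0}" C0] q lab0 LC0 by auto
  qed
  then have INV': "{\<phi> g0} \<subseteq> V \<and> length C0 \<le> length C \<and> take (length C0) C = C0 \<and>
    (\<forall>k. length C0 \<le> k \<and> k < length C \<longrightarrow>
       (fst (C ! k) = q - 1 \<or> (length C0 < fst (C ! k) \<and> fst (C ! k) \<le> k)) \<and>
       (\<exists>xx c m y. lab C (fst (C ! k)) = Some xx \<and> C ! k = (fst (C ! k), c, Some m, Some y) \<and>
          E (xx, y) = Some (c, m) \<and> (xx = \<phi> g0 \<or> xx \<in> V - {\<phi> g0}) \<and> (xx = \<phi> g0 \<longrightarrow> True))) \<and>
    inj_on (pr C) {length C0..<length C}" unfolding INV.simps .
  then have I1: "length C0 \<le> length C" "take (length C0) C = C0"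
    and I2: "\<And>k. length C0 \<le> k \<Longrightarrow> k < length C \<Longrightarrow>
       (fst (C ! k) = q - 1 \<or> (length C0 < fst (C ! k) \<and> fst (C ! k) \<le> k)) \<and>
       (\<exists>xx c m y. lab C (fst (C ! k)) = Some xx \<and> C ! k = (fst (C ! k), c, Some m, Some y) \<and>
          E (xx, y) = Some (c, m))"
    and I3: "inj_on (pr C) {length C0..<length C}"
    by blast+
  have Ck: "\<And>k. k < q - 1 \<Longrightarrow> C ! k = C0 ! k" using take_nth_ext[OF I1(2)] LC0 by simp
  have P: "\<forall>k<length C. fst (C ! k) \<le> k"
  proof (intro allI impI)
    fix k assume k: "k < length C"
    show "fst (C ! k) \<le> k"
    proof (cases "k < q - 1")
      case True then show ?thesis using Ck C0k by simp
    next
      case False then show ?thesis using I2[of k] k LC0 by auto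
    qed
  qed
  have winit: "\<And>j. j \<le> q - 1 \<Longrightarrow> w_str C j = rev (take j T)"
  proof -
    fix j show "j \<le> q - 1 \<Longrightarrow> w_str C j = rev (take j T)"
    proof (induction j)
      case 0 then show ?case by (simp add: w_str_0)
    next
      case (Suc j)
      have j: "j < q - 1" "j < length C" "j < length T" using Suc.prems I1 LC0 lenT T_def by auto
      have "w_str C (Suc j) = T ! j # w_str C j" using w_str_Suc[OF P j(2)] Ck[OF j(1)] C0k[OF j(1)] by simp
      then show ?case using Suc j by (simp add: take_Suc_conv_app_nth)
    qed
  qed
  have CF': "\<forall>x y. sublist x T \<longrightarrow> sublist y T \<longrightarrow>
               length x = q - 1 \<longrightarrow> length y = q - 1 \<longrightarrow> \<phi> x = \<phi> y \<longrightarrow> x = y"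
    using CF unfolding T_def .
  have q1: "q - 1 = Suc (q - 2)" "q = Suc (q - 1)" using q by arith+
  have GR: "\<And>v. q - 1 \<le> v \<Longrightarrow> v \<le> length C \<Longrightarrow>
      \<exists>g. gram T q g \<and> lab C v = Some (\<phi> g) \<and> take (q - 1) (w_str C v) = rev g"
  proof -
    fix v show "q - 1 \<le> v \<Longrightarrow> v \<le> length C \<Longrightarrow>
      \<exists>g. gram T q g \<and> lab C v = Some (\<phi> g) \<and> take (q - 1) (w_str C v) = rev g"
    proof (induction v rule: less_induct)
      case (less v)
      show ?case
      proof (cases "v = q - 1")
        case True
        have "lab C v = Some (\<phi> g0)" using lab_ext[OF I1(2) I1(1)] lab0 LC0 True by simp
        moreover have "take (q - 1) (w_str C v) = rev g0" using winit[of v] True g0 by simp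
        ultimately show ?thesis using gg0 by blast
      next
        case False
        define k where "k = v - 1"
        have k: "length C0 \<le> k" "k < length C" "v = Suc k" using False less.prems LC0 unfolding k_def by auto
        obtain xx c m y where h: "lab C (fst (C ! k)) = Some xx" "C ! k = (fst (C ! k), c, Some m, Some y)"
          "E (xx, y) = Some (c, m)" using I2[OF k(1,2)] by blast
        define pp where "pp = fst (C ! k)"
        have pp: "q - 1 \<le> pp" "pp < v" using I2[OF k(1,2)] LC0 k unfolding pp_def by auto
        obtain a where a: "gram T q a" "lab C pp = Some (\<phi> a)" "take (q - 1) (w_str C pp) = rev a"
          using less.IH[OF pp(2) pp(1)] pp less.prems by auto
        have xx: "xx = \<phi> a" using a(2) h(1) unfolding pp_def by simp
        have y: "y = \<phi> (tl a @ [c])" "gram T q (tl a @ [c])" using GI_next[OF GI a(1) _ CF'] h(3) xx by auto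
        have lv: "lab C v = Some y" unfolding lab_def using k h(2) by (metis snd_conv diff_Suc_1 nat.distinct(1) not_less_eq)
        have wv: "w_str C v = c # w_str C pp" unfolding k(3) pp_def using w_str_Suc[OF P k(2)] h(2)
          by (metis fst_conv snd_conv)
        have la: "length a = q - 1" using a(1) unfolding gram_def by simp
        have "take (q - 2) (w_str C pp) = take (q - 2) (rev a)"
          using a(3) q1 by (metis min.absorb1 take_take le_add2 plus_1_eq_Suc le_Suc_eq)
        also have "\<dots> = rev (tl a)" using la by (simp add: butlast_conv_take numeral_2_eq_2 flip: butlast_rev)
        finally have "take (q - 1) (w_str C v) = rev (tl a @ [c])" unfolding wv q1(1) by simp
        then show ?thesis using lv y by (metis q1(1))
      qed
    qed
  qed
  have KEY: "\<And>k. length C0 \<le> k \<Longrightarrow> k < length C \<Longrightarrow>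
      \<exists>a c. take q (w_str C (Suc k)) = c # rev a \<and> pr C k = (Some (\<phi> a), Some (\<phi> (tl a @ [c])))"
  proof -
    fix k assume k: "length C0 \<le> k" "k < length C"
    obtain xx c m y where h: "lab C (fst (C ! k)) = Some xx" "C ! k = (fst (C ! k), c, Some m, Some y)"
      "E (xx, y) = Some (c, m)" using I2[OF k(1,2)] by blast
    define pp where "pp = fst (C ! k)"
    have pp: "q - 1 \<le> pp" "pp \<le> length C" using I2[OF k(1,2)] LC0 k unfolding pp_def by auto
    obtain a where a: "gram T q a" "lab C pp = Some (\<phi> a)" "take (q - 1) (w_str C pp) = rev a"
      using GR[OF pp] by auto
    have xx: "xx = \<phi> a" using a(2) h(1) unfolding pp_def by simp
    have y: "y = \<phi> (tl a @ [c])" using GI_next[OF GI a(1) _ CF'] h(3) xx by auto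
    have wv: "w_str C (Suc k) = c # w_str C pp" unfolding pp_def using w_str_Suc[OF P k(2)] h(2)
      by (metis fst_conv snd_conv)
    have t: "take q (w_str C (Suc k)) = c # rev a" unfolding wv using a(3) q1(2) by (metis take_Suc_Cons)
    have "pr C k = (Some (\<phi> a), Some (\<phi> (tl a @ [c])))" unfolding pr_def using h(1,2) xx y
      by (metis snd_conv)
    then show "\<exists>a c. take q (w_str C (Suc k)) = c # rev a \<and> pr C k = (Some (\<phi> a), Some (\<phi> (tl a @ [c])))"
      using t by blast
  qed
  have UNQ: "\<And>u v. q \<le> u \<Longrightarrow> u \<le> length C \<Longrightarrow> q \<le> v \<Longrightarrow> v \<le> length C \<Longrightarrow>
      take q (w_str C u) = take q (w_str C v) \<Longrightarrow> u = v"
  proof -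
    fix u v assume u: "q \<le> u" "u \<le> length C" and v: "q \<le> v" "v \<le> length C"
      and t: "take q (w_str C u) = take q (w_str C v)"
    have ku: "length C0 \<le> u - 1" "u - 1 < length C" "Suc (u - 1) = u" using u LC0 q by auto
    have kv: "length C0 \<le> v - 1" "v - 1 < length C" "Suc (v - 1) = v" using v LC0 q by auto
    obtain a c where ac: "take q (w_str C u) = c # rev a" "pr C (u - 1) = (Some (\<phi> a), Some (\<phi> (tl a @ [c])))"
      using KEY[OF ku(1,2)] ku(3) by auto
    obtain a' c' where ac': "take q (w_str C v) = c' # rev a'" "pr C (v - 1) = (Some (\<phi> a'), Some (\<phi> (tl a' @ [c'])))"
      using KEY[OF kv(1,2)] kv(3) by auto
    have "c = c'" "a = a'" using ac(1) ac'(1) t by auto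
    then have prr: "pr C (u - 1) = pr C (v - 1)" using ac(2) ac'(2) by simp
    have m: "u - 1 \<in> {length C0..<length C}" "v - 1 \<in> {length C0..<length C}" using ku kv by auto
    have uv: "u - 1 = v - 1" by (rule inj_onD[OF I3 prr m])
    show "u = v" using uv u v q by arith
  qed
  have SHORT: "\<And>u. u \<le> length C \<Longrightarrow> q \<le> length (w_str C u) \<Longrightarrow> q \<le> u"
  proof (rule ccontr)
    fix u assume u: "u \<le> length C" "q \<le> length (w_str C u)" "\<not> q \<le> u"
    then have "w_str C u = rev (take u T)" using winit by simp
    then have "length (w_str C u) \<le> u" by simp
    then show False using u by simp
  qed
  define S where "S = suffix_strings C"
  have Sform: "\<And>s. s \<in> S \<Longrightarrow> \<exists>u. u \<le> length C \<and> s = map Some (w_str C u) @ [None]"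
    unfolding S_def suffix_strings_def by blast
  have takeS: "\<And>x a s u. q \<le> length x \<Longrightarrow> prefix (x @ [a]) s \<Longrightarrow> s = map Some (w_str C u) @ [None] \<Longrightarrow>
      q \<le> length (w_str C u) \<and> take q x = map Some (take q (w_str C u))"
  proof -
    fix x a s u assume x: "q \<le> length x" and p: "prefix (x @ [a]) s" and s: "s = map Some (w_str C u) @ [None]"
    obtain z where z: "s = x @ [a] @ z" using p unfolding prefix_def by auto
    have "length (x @ [a]) \<le> length s" using z by simp
    then have l: "q \<le> length (w_str C u)" using x s by simp
    have "take q s = take q x" using z x by simp
    moreover have "take q s = map Some (take q (w_str C u))" using s l by (simp add: take_map)
    ultimately show "q \<le> length (w_str C u) \<and> take q x = map Some (take q (w_str C u))" using l by simp
  qed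
  have NB: "\<And>x a b s1 s2. q \<le> length x \<Longrightarrow> s1 \<in> S \<Longrightarrow> s2 \<in> S \<Longrightarrow> prefix (x @ [a]) s1 \<Longrightarrow>
      prefix (x @ [b]) s2 \<Longrightarrow> a = b"
  proof -
    fix x a b s1 s2 assume x: "q \<le> length x" and s: "s1 \<in> S" "s2 \<in> S"
      and p: "prefix (x @ [a]) s1" "prefix (x @ [b]) s2"
    obtain u where u: "u \<le> length C" "s1 = map Some (w_str C u) @ [None]" using Sform[OF s(1)] by blast
    obtain v where v: "v \<le> length C" "s2 = map Some (w_str C v) @ [None]" using Sform[OF s(2)] by blast
    have tu: "q \<le> length (w_str C u)" "take q x = map Some (take q (w_str C u))" using takeS[OF x p(1) u(2)] by auto
    have tv: "q \<le> length (w_str C v)" "take q x = map Some (take q (w_str C v))" using takeS[OF x p(2) v(2)] by auto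
    have "take q (w_str C u) = take q (w_str C v)" using tu(2) tv(2) by (simp add: inj_map_eq_map)
    then have "u = v" using UNQ SHORT u(1) v(1) tu(1) tv(1) by blast
    then have "s1 = s2" using u v by simp
    then show "a = b" using p prefix_same_next by metis
  qed
  have leafS: "\<And>x y. x \<in> S \<Longrightarrow> y \<in> ctrie_nodes S \<Longrightarrow> strict_prefix x y \<Longrightarrow> False"
  proof -
    fix x y assume x: "x \<in> S" and y: "y \<in> ctrie_nodes S" and sp: "strict_prefix x y"
    obtain w1 where w1: "x = map Some w1 @ [None]" using Sform[OF x] by blast
    have S0: "map Some (w_str C 0) @ [None] \<in> S" unfolding S_def suffix_strings_def by blast
    have "\<exists>s \<in> S. prefix y s"
      using y unfolding ctrie_nodes_def
    proof (elim UnE)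
      assume "y \<in> {[]}" then show ?thesis using S0 by auto
    next
      assume "y \<in> S" then show ?thesis by blast
    next
      assume "y \<in> {x. \<exists>a b. a \<noteq> b \<and> (\<exists>s\<in>S. prefix (x @ [a]) s) \<and> (\<exists>s\<in>S. prefix (x @ [b]) s)}"
      then obtain a s where "s \<in> S" "prefix (y @ [a]) s" by blast
      moreover have "prefix y (y @ [a])" by simp
      ultimately show ?thesis using prefix_order.trans by blast
    qed
    then obtain s where s: "s \<in> S" "prefix y s" by blast
    obtain w2 where w2: "s = map Some w2 @ [None]" using Sform[OF s(1)] by blast
    have "prefix x s" using sp s(2) by (meson prefix_order.trans strict_prefix_def)
    then have "x = s" using w1 w2 prefix_SomeNone by blast
    then show False using sp s(2) by (metis prefix_order.antisym_conv1 prefix_order.le_less_trans prefix_order.less_irrefl)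
  qed
  show ?thesis unfolding S_def[symmetric]
  proof (intro ballI impI)
    fix x assume xn: "x \<in> ctrie_nodes S" and xq: "q \<le> sdepth x"
    have lx: "q \<le> length x" using xq unfolding sdepth_def .
    have xS: "x \<in> S"
    proof -
      have "x \<noteq> []" using lx q by auto
      moreover have "\<not> (\<exists>a b. a \<noteq> b \<and> (\<exists>s\<in>S. prefix (x @ [a]) s) \<and> (\<exists>s\<in>S. prefix (x @ [b]) s))"
        using NB[OF lx] by blast
      ultimately show ?thesis using xn unfolding ctrie_nodes_def by blast
    qed
    show "ctrie_leaf S x" unfolding ctrie_leaf_def using xn leafS[OF xS] by blast
  qed
qed

end
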